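(* Let $\mu$ be a probability measure on $\mathbb{C}$, $X_1,X_2,\ldots$ iid with law $\mu$, $0\le k_n\le n$ deterministic with $k_n = o(n)$, $\xi_l^{(n)}$ a deterministic triangular array, and $L_n(z) := \sum_{j=1}^{n-k_n}\frac{1}{z - X_j} + \sum_{l=1}^{k_n}\frac{1}{z - \xi_l^{(n)}}$. Then there is a set $G \subset (0,\infty)$ of Lebesgue measure zero such that for every $R \in (0,\infty)\setminus G$, \[ \limsup_{n\to\infty}\frac{1}{n}\log\sup_{|z| = R}|L_n(z)| \le 0 \] almost surely. *)

theory Defs
  imports "HOL-Probability.Probability"
begin

text \<open>L_n(z) = sum_{j=1}^{n-k_n} 1/(z - X_j) + sum_{l=1}^{k_n} 1/(z - xi_l^(n)),
  with x = sample sequence (X_1, X_2, ...) and xi = row n of the triangular array.\<close>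
definition Lfun :: "nat \<Rightarrow> nat \<Rightarrow> (nat \<Rightarrow> complex) \<Rightarrow> (nat \<Rightarrow> complex) \<Rightarrow> complex \<Rightarrow> complex" where
  "Lfun n kn x xi z = (\<Sum>j=1..n - kn. 1 / (z - x j)) + (\<Sum>l=1..kn. 1 / (z - xi l))"

definition poles :: "nat \<Rightarrow> nat \<Rightarrow> (nat \<Rightarrow> complex) \<Rightarrow> (nat \<Rightarrow> complex) \<Rightarrow> complex set" where
  "poles n kn x xi = x ` {1..n - kn} \<union> xi ` {1..kn}"

text \<open>|L_n(z)| as an extended real: +infinity at a pole (avoiding the HOL convention 1/0 = 0).\<close>
definition absL :: "nat \<Rightarrow> nat \<Rightarrow> (nat \<Rightarrow> complex) \<Rightarrow> (nat \<Rightarrow> complex) \<Rightarrow> complex \<Rightarrow> ereal" where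
  "absL n kn x xi z = (if z \<in> poles n kn x xi then \<infinity> else ereal (cmod (Lfun n kn x xi z)))"

definition supL :: "nat \<Rightarrow> nat \<Rightarrow> (nat \<Rightarrow> complex) \<Rightarrow> (nat \<Rightarrow> complex) \<Rightarrow> real \<Rightarrow> ereal" where
  "supL n kn x xi R = (SUP z\<in>sphere 0 R. absL n kn x xi z)"

definition eln :: "ereal \<Rightarrow> ereal" where
  "eln t = (if t = \<infinity> then \<infinity> else if t \<le> 0 then -\<infinity> else ereal (ln (real_of_ereal t)))"

end

theory Submission imports Defs "HOL-Real_Asymp.Real_Asymp" begin

definition dl :: "nat \<Rightarrow> nat \<Rightarrow> real" where
  "dl m n = exp (- real n / real (Suc m)) / real (Suc n)"
definition bad :: "nat \<Rightarrow> nat \<Rightarrow> complex \<Rightarrow> real \<Rightarrow> real" where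
  "bad m n p R = (if cmod p - dl m n < R \<and> R < cmod p + dl m n then 1 else 0)"
definition cnt :: "nat \<Rightarrow> nat \<Rightarrow> (nat \<Rightarrow> complex) \<Rightarrow> (nat \<Rightarrow> complex) \<Rightarrow> real \<Rightarrow> real" where
  "cnt m n x xi R = (\<Sum>j=1..n. bad m n (x j) R) + (\<Sum>l=1..n. bad m n (xi l) R)"

lemma dl_pos: "dl m n > 0" by (simp add: dl_def)

lemma lim: "(\<lambda>n. ln (real n / dl m n) / real n) \<longlonglongrightarrow> 1 / real (Suc m)"
  unfolding dl_def by (real_asymp, simp add: inverse_eq_divide)

lemma eln_bound:
  assumes "t \<le> ereal c" "c > 0" "n > 0"
  shows "ereal (1 / real n) * eln t \<le> ereal (ln c / real n)"
proof (cases "t \<le> 0")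
  case True
  then have "eln t = -\<infinity>" using assms by (auto simp: eln_def)
  then show ?thesis using assms by simp
next
  case False
  then have t: "t \<noteq> \<infinity>" "t > 0" using assms by auto
  then obtain r where r: "t = ereal r" "r > 0" by (cases t) auto
  then have "r \<le> c" using assms by simp
  then have "ln r \<le> ln c" using r by simp
  then show ?thesis using r t assms by (simp add: eln_def divide_right_mono)
qed

lemma sup_bound:
  assumes "\<delta> > 0" "kn \<le> n"
    and hx: "\<And>j. j \<in> {1..n} \<Longrightarrow> \<bar>cmod (x j) - R\<bar> \<ge> \<delta>"
    and hxi: "\<And>j. j \<in> {1..n} \<Longrightarrow> \<bar>cmod (xi j) - R\<bar> \<ge> \<delta>"
  shows "supL n kn x xi R \<le> ereal (real n / \<delta>)"
  unfolding supL_def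
proof (rule SUP_least)
  fix z assume z: "z \<in> sphere (0::complex) R"
  have d: "cmod (z - p) \<ge> \<delta>" if "\<bar>cmod p - R\<bar> \<ge> \<delta>" for p
  proof -
    have "\<bar>cmod z - cmod p\<bar> \<le> cmod (z - p)" by (rule norm_triangle_ineq3)
    then show ?thesis using z that by auto
  qed
  have np: "z \<notin> poles n kn x xi"
  proof
    assume "z \<in> poles n kn x xi"
    then obtain p where "z = p" "\<bar>cmod p - R\<bar> \<ge> \<delta>"
      unfolding poles_def using hx hxi assms(2) by fastforce
    then show False using d[of p] assms(1) by simp
  qed
  have b: "cmod (1 / (z - p)) \<le> 1 / \<delta>" if "\<bar>cmod p - R\<bar> \<ge> \<delta>" for p
  proof -
    have "cmod (z - p) \<ge> \<delta>" using d that .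
    then show ?thesis using assms(1) by (simp add: norm_divide frac_le)
  qed
  have "cmod (Lfun n kn x xi z) \<le> (\<Sum>j=1..n - kn. cmod (1 / (z - x j))) + (\<Sum>l=1..kn. cmod (1 / (z - xi l)))"
    unfolding Lfun_def by (rule order_trans[OF norm_triangle_ineq add_mono[OF norm_sum norm_sum]])
  also have "\<dots> \<le> (\<Sum>j=1..n - kn. 1 / \<delta>) + (\<Sum>l=1..kn. 1 / \<delta>)"
    by (intro add_mono sum_mono b) (use hx hxi assms(2) in auto)
  also have "\<dots> = real n / \<delta>" using assms(2) by (simp add: of_nat_diff diff_divide_distrib)
  finally show "absL n kn x xi z \<le> ereal (real n / \<delta>)"
    using np by (simp add: absL_def)
qed

lemma det:
  fixes x :: "nat \<Rightarrow> complex" and xi :: "nat \<Rightarrow> nat \<Rightarrow> complex"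
  assumes fin: "\<And>m. (\<Sum>n. ennreal (cnt m n x (xi n) R)) \<noteq> \<top>" and kn: "\<And>n. kn n \<le> n"
  shows "limsup (\<lambda>n. ereal (1 / real n) * eln (supL n (kn n) x (xi n) R)) \<le> 0"
proof (rule ereal_le_epsilon2)
  fix e :: real assume "e > 0"
  then obtain m where m: "1 / real (Suc m) < e"
    using reals_Archimedean[OF \<open>e > 0\<close>] by (auto simp: inverse_eq_divide)
  have nn: "cnt m n x (xi n) R \<ge> 0" for n
    unfolding cnt_def bad_def by (intro add_nonneg_nonneg sum_nonneg) auto
  have "summable (\<lambda>n. cnt m n x (xi n) R)"
    by (rule summable_suminf_not_top[OF nn fin])
  then have "(\<lambda>n. cnt m n x (xi n) R) \<longlonglongrightarrow> 0" by (rule summable_LIMSEQ_zero)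
  then have ev: "eventually (\<lambda>n. cnt m n x (xi n) R < 1) sequentially"
    by (rule order_tendstoD) simp
  have "eventually (\<lambda>n. ereal (1 / real n) * eln (supL n (kn n) x (xi n) R)
           \<le> ereal (ln (real n / dl m n) / real n)) sequentially"
    using ev eventually_gt_at_top[of 0]
  proof eventually_elim
    case (elim n)
    have b0: "bad m n p R = 0" if "bad m n p R \<le> cnt m n x (xi n) R" for p
      using that elim by (auto simp: bad_def split: if_splits)
    have bx: "bad m n (x j) R \<le> cnt m n x (xi n) R" if "j \<in> {1..n}" for j
    proof -
      have "bad m n (x j) R \<le> (\<Sum>j=1..n. bad m n (x j) R)"
        by (rule member_le_sum) (use that in \<open>auto simp: bad_def\<close>)
      moreover have "0 \<le> (\<Sum>l=1..n. bad m n (xi n l) R)"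
        by (intro sum_nonneg) (auto simp: bad_def)
      ultimately show ?thesis unfolding cnt_def by linarith
    qed
    have bxi: "bad m n (xi n j) R \<le> cnt m n x (xi n) R" if "j \<in> {1..n}" for j
    proof -
      have "bad m n (xi n j) R \<le> (\<Sum>j=1..n. bad m n (xi n j) R)"
        by (rule member_le_sum) (use that in \<open>auto simp: bad_def\<close>)
      moreover have "0 \<le> (\<Sum>l=1..n. bad m n (x l) R)"
        by (intro sum_nonneg) (auto simp: bad_def)
      ultimately show ?thesis unfolding cnt_def by linarith
    qed
    have g: "\<bar>cmod p - R\<bar> \<ge> dl m n" if "bad m n p R = 0" for p
      using that by (auto simp: bad_def split: if_splits)
    have "supL n (kn n) x (xi n) R \<le> ereal (real n / dl m n)"
      by (rule sup_bound[OF dl_pos kn]) (use g b0 bx bxi in blast)+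
    then show ?case
      by (rule eln_bound) (use elim dl_pos in \<open>auto intro: divide_pos_pos\<close>)
  qed
  then have "limsup (\<lambda>n. ereal (1 / real n) * eln (supL n (kn n) x (xi n) R))
      \<le> limsup (\<lambda>n. ereal (ln (real n / dl m n) / real n))"
    by (rule Limsup_mono)
  also have "\<dots> = ereal (1 / real (Suc m))"
    by (rule lim_imp_Limsup[OF _ tendsto_ereal[OF lim]]) simp
  also have "\<dots> \<le> 0 + ereal e" using m by simp
  finally show "limsup (\<lambda>n. ereal (1 / real n) * eln (supL n (kn n) x (xi n) R)) \<le> 0 + ereal e" .
qed

lemma ennreal_bad: "ennreal (bad m n p R) = indicator {cmod p - dl m n <..< cmod p + dl m n} R"
  by (simp add: bad_def indicator_def)

lemma ennreal_cnt: "ennreal (cnt m n x xi R) =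
   (\<Sum>j=1..n. indicator {cmod (x j) - dl m n <..< cmod (x j) + dl m n} R) +
   (\<Sum>j=1..n. indicator {cmod (xi j) - dl m n <..< cmod (xi j) + dl m n} R)"
proof -
  have nn: "\<And>p. 0 \<le> bad m n p R" by (simp add: bad_def)
  have "ennreal (cnt m n x xi R) = ennreal (\<Sum>j=1..n. bad m n (x j) R) + ennreal (\<Sum>j=1..n. bad m n (xi j) R)"
    unfolding cnt_def by (rule ennreal_plus) (auto intro: sum_nonneg nn)
  also have "\<dots> = (\<Sum>j=1..n. ennreal (bad m n (x j) R)) + (\<Sum>j=1..n. ennreal (bad m n (xi j) R))"
    by (simp add: nn)
  finally show ?thesis by (simp add: ennreal_bad)
qed

lemma int_R: "(\<integral>\<^sup>+R. ennreal (cnt m n x xi R) \<partial>lborel) = ennreal (4 * real n * dl m n)"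
proof -
  have le: "cmod p - dl m n \<le> cmod p + dl m n" for p using dl_pos[of m n] by simp
  have "(\<integral>\<^sup>+R. ennreal (cnt m n x xi R) \<partial>lborel) =
     (\<Sum>j=1..n. \<integral>\<^sup>+R. indicator {cmod (x j) - dl m n <..< cmod (x j) + dl m n} R \<partial>lborel) +
     (\<Sum>j=1..n. \<integral>\<^sup>+R. indicator {cmod (xi j) - dl m n <..< cmod (xi j) + dl m n} R \<partial>lborel)"
    unfolding ennreal_cnt by (simp add: nn_integral_add nn_integral_sum)
  also have "\<dots> = (\<Sum>j=1..n. ennreal (2 * dl m n)) + (\<Sum>j=1..n. ennreal (2 * dl m n))"
    using le by (simp add: emeasure_lborel_Ioo)
  also have "\<dots> = ennreal (4 * real n * dl m n)"
  proof -
    have "(\<Sum>j=1..n. ennreal (2 * dl m n)) = ennreal (real n * (2 * dl m n))"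
      using dl_pos[of m n] by (simp add: ennreal_mult ennreal_of_nat_eq_real_of_nat)
    then show ?thesis using dl_pos[of m n]
      by (simp add: ennreal_plus[symmetric] del: ennreal_plus)
  qed
  finally show ?thesis .
qed

lemma bnd: "4 * real n * dl m n \<le> 4 * exp (- 1 / real (Suc m)) ^ n"
proof -
  have "real n / real (Suc n) \<le> 1" by simp
  moreover have "exp (- real n / real (Suc m)) = exp (- 1 / real (Suc m)) ^ n"
    by (simp add: exp_of_nat_mult[symmetric])
  moreover have "0 \<le> exp (- 1 / real (Suc m)) ^ n" by simp
  ultimately have "exp (- 1 / real (Suc m)) ^ n * (real n / real (Suc n)) \<le> exp (- 1 / real (Suc m)) ^ n * 1"
    by (intro mult_left_mono) auto
  note ineq = this
  have "4 * real n * dl m n = 4 * (exp (- 1 / real (Suc m)) ^ n * (real n / real (Suc n)))"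
    unfolding dl_def \<open>exp (- real n / real (Suc m)) = _\<close> by simp
  also have "\<dots> \<le> 4 * (exp (- 1 / real (Suc m)) ^ n * 1)" using ineq by linarith
  finally show ?thesis by simp
qed

lemma meas:
  fixes X :: "nat \<Rightarrow> 'a \<Rightarrow> complex"
  assumes [measurable]: "\<And>j. X j \<in> borel_measurable M"
  shows "(\<lambda>(R,\<omega>). (\<Sum>n. ennreal (cnt m n (\<lambda>j. X j \<omega>) (\<xi> n) R))) \<in> borel_measurable (lborel \<Otimes>\<^sub>M M)"
  unfolding cnt_def bad_def by measurable

lemma measR: "(\<lambda>R. ennreal (cnt m n x xi R)) \<in> borel_measurable lborel"
  unfolding cnt_def bad_def by measurable

theorem mainTheorem17:
  fixes \<mu> :: "complex measure"
    and M :: "'a measure"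
    and X :: "nat \<Rightarrow> 'a \<Rightarrow> complex"
    and k :: "nat \<Rightarrow> nat"
    and \<xi> :: "nat \<Rightarrow> nat \<Rightarrow> complex"
  assumes "prob_space \<mu>" and "sets \<mu> = sets borel"
    and "prob_space M"
    and "\<And>j. X j \<in> borel_measurable M"
    and "prob_space.indep_vars M (\<lambda>_. borel) X UNIV"
    and "\<And>j. distr M borel (X j) = \<mu>"
    and "\<And>n. k n \<le> n"
    and "(\<lambda>n. real (k n) / real n) \<longlonglongrightarrow> 0"
  shows "\<exists>G \<subseteq> {0<..}. G \<in> null_sets lborel \<and>
           (\<forall>R. R > 0 \<and> R \<notin> G \<longrightarrow>
              (AE \<omega> in M. limsup (\<lambda>n. ereal (1 / real n) * eln (supL n (k n) (\<lambda>j. X j \<omega>) (\<xi> n) R)) \<le> 0))"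
proof -
  interpret M: prob_space M by fact
  interpret P: pair_sigma_finite lborel M
    by (intro pair_sigma_finite.intro lborel.sigma_finite_measure_axioms M.sigma_finite_measure_axioms)
  define g where "g m = (\<lambda>(R,\<omega>). (\<Sum>n. ennreal (cnt m n (\<lambda>j. X j \<omega>) (\<xi> n) R)))" for m
  have gm: "g m \<in> borel_measurable (lborel \<Otimes>\<^sub>M M)" for m
    unfolding g_def by (rule meas) (rule assms(4))
  define C where "C m = (\<Sum>n. ennreal (4 * exp (- 1 / real (Suc m)) ^ n))" for m
  have Cfin: "C m \<noteq> \<top>" for m
  proof -
    have "norm (exp (- 1 / real (Suc m))) < 1" by simp
    then have "summable (\<lambda>n. 4 * exp (- 1 / real (Suc m)) ^ n)"
      by (intro summable_mult summable_geometric)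
    then show ?thesis unfolding C_def by (rule ennreal_suminf_neq_top) simp
  qed
  have inner: "(\<integral>\<^sup>+R. g m (R,\<omega>) \<partial>lborel) \<le> C m" for m \<omega>
  proof -
    have "(\<integral>\<^sup>+R. g m (R,\<omega>) \<partial>lborel) = (\<Sum>n. \<integral>\<^sup>+R. ennreal (cnt m n (\<lambda>j. X j \<omega>) (\<xi> n) R) \<partial>lborel)"
      unfolding g_def by (simp, rule nn_integral_suminf, rule measR)
    also have "\<dots> = (\<Sum>n. ennreal (4 * real n * dl m n))" by (simp add: int_R)
    also have "\<dots> \<le> C m" unfolding C_def
      by (intro suminf_le summableI ennreal_leI bnd)
    finally show ?thesis .
  qed
  define F where "F m R = (\<integral>\<^sup>+\<omega>. g m (R,\<omega>) \<partial>M)" for m R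
  have Fm: "F m \<in> borel_measurable lborel" for m
    unfolding F_def by (rule M.borel_measurable_nn_integral_fst[OF gm])
  have Fint: "(\<integral>\<^sup>+R. F m R \<partial>lborel) \<noteq> \<infinity>" for m
  proof -
    have "(\<integral>\<^sup>+R. F m R \<partial>lborel) = (\<integral>\<^sup>+\<omega>. (\<integral>\<^sup>+R. g m (R,\<omega>) \<partial>lborel) \<partial>M)"
      unfolding F_def by (rule P.Fubini[OF gm, symmetric])
    also have "\<dots> \<le> (\<integral>\<^sup>+\<omega>. C m \<partial>M)" by (intro nn_integral_mono inner)
    also have "\<dots> = C m" by (simp add: M.emeasure_space_1)
    finally show ?thesis using Cfin[of m] by (auto simp: top_unique)
  qed
  define N where "N m = F m -` {\<infinity>} \<inter> space lborel" for m
  have Nnull: "N m \<in> null_sets lborel" for m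
  proof (rule null_setsI)
    show "emeasure lborel (N m) = 0" unfolding N_def by (rule nn_integral_PInf[OF Fm Fint])
    show "N m \<in> sets lborel" unfolding N_def by (rule measurable_sets[OF Fm]) simp
  qed
  define G where "G = {0<..} \<inter> (\<Union>m. N m)"
  have "G \<in> null_sets lborel" unfolding G_def
    by (rule null_set_Int1) (auto intro: Nnull)
  moreover have "\<forall>R. R > 0 \<and> R \<notin> G \<longrightarrow>
      (AE \<omega> in M. limsup (\<lambda>n. ereal (1 / real n) * eln (supL n (k n) (\<lambda>j. X j \<omega>) (\<xi> n) R)) \<le> 0)"
  proof (intro allI impI)
    fix R :: real assume R: "R > 0 \<and> R \<notin> G"
    then have FR: "F m R \<noteq> \<infinity>" for m by (auto simp: G_def N_def)
    have "AE \<omega> in M. g m (R,\<omega>) \<noteq> \<infinity>" for m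
      using FR[of m] unfolding F_def
      by (intro nn_integral_PInf_AE measurable_compose_Pair1[OF _ gm]) auto
    then have "AE \<omega> in M. \<forall>m. g m (R,\<omega>) \<noteq> \<infinity>" by (simp add: AE_all_countable)
    then show "AE \<omega> in M. limsup (\<lambda>n. ereal (1 / real n) * eln (supL n (k n) (\<lambda>j. X j \<omega>) (\<xi> n) R)) \<le> 0"
    proof (rule eventually_mono)
      fix \<omega> assume "\<forall>m. g m (R,\<omega>) \<noteq> \<infinity>"
      then show "limsup (\<lambda>n. ereal (1 / real n) * eln (supL n (k n) (\<lambda>j. X j \<omega>) (\<xi> n) R)) \<le> 0"
        by (intro det[where kn = k]) (auto simp: g_def assms(7))
    qed
  qed
  moreover have "G \<subseteq> {0<..}" by (auto simp: G_def)
  ultimately show ?thesis by blast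
qed

end
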